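(* Let $X,Y\in L^\infty$ and let $\mathcal{G}\subseteq\mathcal{F}$ be a sub-$\sigma$-field. Then $D_H(\mathbb{E}[X\mid\mathcal{G}],\mathbb{E}[Y\mid\mathcal{G}])\le\|X-Y\|_\infty$.
   Context: $\mathbb{K}$ is a local field with non-archimedean absolute value $|\cdot|$ satisfying $|x|=0 \iff x=0$, $|xy|=|x||y|$, $|x+y|\le|x|\vee|y|$. $(\Omega,\mathcal{F},\mathbb{P})$ is a probability space; all (in)equalities are a.s. $L^\infty$ is the space of $\mathbb{K}$-valued random variables $X$ with $\|X\|_\infty:=\operatorname{ess\,sup}|X|<\infty$; $L^\infty(\mathcal{G})$ its $\mathcal{G}$-measurable subspace. For a non-negative real random variable $S$, $\operatorname{ess\,sup}\{S\mid\mathcal{G}\}:=\sup_{p\ge1}\mathbb{E}[S^p\mid\mathcal{G}]^{1/p}$ (usual real conditional expectation), $\|X\|_\mathcal{G}:=\operatorname{ess\,sup}\{|X|\mid\mathcal{G}\}$, and the conditional expectation is the set $\mathbb{E}[X\mid\mathcal{G}]:=\{Y\in L^\infty(\mathcal{G}): \|X-Y\|_\mathcal{G}\le\|X-Z\|_\mathcal{G}\text{ for all }Z\in L^\infty(\mathcal{G})\}$. For subsets $A,B\subseteq L^\infty$, $D_H(A,B):=\sup_{U\in A}\inf_{V\in B}\|U-V\|_\infty\vee\sup_{V\in B}\inf_{U\in A}\|V-U\|_\infty$. *)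

theory Defs
  imports "HOL-Probability.Probability"
begin

definition nonarch_abs :: "('k::field \<Rightarrow> real) \<Rightarrow> bool" where
  "nonarch_abs nm \<longleftrightarrow>
     (\<forall>x. nm x = 0 \<longleftrightarrow> x = 0) \<and>
     (\<forall>x y. nm (x * y) = nm x * nm y) \<and>
     (\<forall>x y. nm (x + y) \<le> max (nm x) (nm y))"

text \<open>The field 'k (carrying its metric topology) is a local field with respect to nm:
  the metric is induced by nm, nm is non-trivial (non-discrete topology), and 'k is
  locally compact.\<close>
definition local_field_abs :: "('k::{field, metric_space} \<Rightarrow> real) \<Rightarrow> bool" where
  "local_field_abs nm \<longleftrightarrow>
     nonarch_abs nm \<and>
     (\<forall>x y. dist x y = nm (x - y)) \<and>
     (\<exists>x. nm x \<noteq> 0 \<and> nm x \<noteq> 1) \<and>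
     (\<exists>e>0. compact (cball (0::'k) e))"

definition norm_inf :: "'a measure \<Rightarrow> ('k \<Rightarrow> real) \<Rightarrow> ('a \<Rightarrow> 'k) \<Rightarrow> ereal" where
  "norm_inf M nm X = esssup M (\<lambda>\<omega>. ereal (nm (X \<omega>)))"

text \<open>\<open>L\<^sup>\<infinity>(\<G>)\<close>: essentially bounded \<G>-measurable random variables
  (with \<G> = M this is \<open>L\<^sup>\<infinity>\<close>).\<close>
definition Linf :: "'a measure \<Rightarrow> 'a measure \<Rightarrow> ('k::topological_space \<Rightarrow> real) \<Rightarrow> ('a \<Rightarrow> 'k) set" where
  "Linf M G nm = {X. X \<in> borel_measurable G \<and> norm_inf M nm X < \<infinity>}"

definition cond_ess_sup :: "'a measure \<Rightarrow> 'a measure \<Rightarrow> ('a \<Rightarrow> real) \<Rightarrow> 'a \<Rightarrow> real" where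
  "cond_ess_sup M G S = (\<lambda>\<omega>. SUP p\<in>{1::nat..}. (real_cond_exp M G (\<lambda>x. S x ^ p) \<omega>) powr (1 / real p))"

definition cond_norm :: "'a measure \<Rightarrow> 'a measure \<Rightarrow> ('k \<Rightarrow> real) \<Rightarrow> ('a \<Rightarrow> 'k) \<Rightarrow> 'a \<Rightarrow> real" where
  "cond_norm M G nm X = cond_ess_sup M G (\<lambda>\<omega>. nm (X \<omega>))"

text \<open>The conditional expectation as a set of best \<G>-approximations.\<close>
definition cond_exp_set :: "'a measure \<Rightarrow> 'a measure \<Rightarrow> ('k::{field, topological_space} \<Rightarrow> real) \<Rightarrow> ('a \<Rightarrow> 'k) \<Rightarrow> ('a \<Rightarrow> 'k) set" where
  "cond_exp_set M G nm X =
     {Y \<in> Linf M G nm. \<forall>Z \<in> Linf M G nm.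
        AE \<omega> in M. cond_norm M G nm (\<lambda>x. X x - Y x) \<omega> \<le> cond_norm M G nm (\<lambda>x. X x - Z x) \<omega>}"

definition hausdorff_dist :: "'a measure \<Rightarrow> ('k::field \<Rightarrow> real) \<Rightarrow> ('a \<Rightarrow> 'k) set \<Rightarrow> ('a \<Rightarrow> 'k) set \<Rightarrow> ereal" where
  "hausdorff_dist M nm A B =
     max (SUP U\<in>A. INF V\<in>B. norm_inf M nm (\<lambda>x. U x - V x))
         (SUP V\<in>B. INF U\<in>A. norm_inf M nm (\<lambda>x. V x - U x))"

end

theory Submission
  imports Defs
begin

locale lf =
  fixes nm :: "'k::{field,metric_space,second_countable_topology} \<Rightarrow> real"
  assumes lf: "local_field_abs nm"
begin

lemma nm_dist: "dist x y = nm (x - y)"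
  using lf by (simp add: local_field_abs_def)

lemma nm_nonneg[simp]: "0 \<le> nm x"
  using nm_dist[of x 0] by (metis diff_zero zero_le_dist)

lemma nm_eq0[simp]: "nm x = 0 \<longleftrightarrow> x = 0"
  using lf by (simp add: local_field_abs_def nonarch_abs_def)

lemma nm_zero[simp]: "nm 0 = 0" by simp

lemma nm_pos[simp]: "0 < nm x \<longleftrightarrow> x \<noteq> 0"
  using nm_nonneg[of x] nm_eq0[of x] by linarith

lemma nm_mult: "nm (x * y) = nm x * nm y"
  using lf by (simp add: local_field_abs_def nonarch_abs_def)

lemma nm_add: "nm (x + y) \<le> max (nm x) (nm y)"
  using lf by (simp add: local_field_abs_def nonarch_abs_def)

lemma nm_one[simp]: "nm 1 = 1"
proof -
  have "nm 1 = nm 1 * nm 1" using nm_mult[of 1 1] by simp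
  moreover have "nm 1 \<noteq> 0" by simp
  ultimately show ?thesis by simp
qed

lemma nm_minus[simp]: "nm (- x) = nm x"
proof -
  have "nm (-1) * nm (-1) = 1" using nm_mult[of "-1" "-1"] by simp
  then have "nm (-1) = 1" using nm_nonneg[of "-1"]
    by (metis abs_of_nonneg mult_cancel_left1 mult_minus1_right mult_minus_left nm_mult nm_one real_sqrt_abs2 real_sqrt_one)
  then show ?thesis using nm_mult[of "-1" x] by simp
qed

lemma nm_sym: "nm (x - y) = nm (y - x)"
  by (metis minus_diff_eq nm_minus)

lemma nm_tri: "nm (x - z) \<le> max (nm (x - y)) (nm (y - z))"
  using nm_add[of "x - y" "y - z"] by simp

lemma nm_tri': "nm x \<le> max (nm (x - y)) (nm y)"
  using nm_tri[of x 0 y] by simp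

lemma nm_eq_of_close: "nm (x - y) < nm y \<Longrightarrow> nm x = nm y"
proof -
  assume a: "nm (x - y) < nm y"
  have 1: "nm x \<le> max (nm (x - y)) (nm y)" by (rule nm_tri')
  have 2: "nm y \<le> max (nm (y - x)) (nm x)" by (rule nm_tri')
  have "nm (y - x) = nm (x - y)" by (rule nm_sym)
  have 3: "nm x \<le> nm y" using 1 a by (simp add: max_def split: if_splits)
  have "\<not> nm x < nm y"
  proof
    assume "nm x < nm y"
    then have "max (nm (y - x)) (nm x) < nm y" using a \<open>nm (y - x) = nm (x - y)\<close> by simp
    then show False using 2 by linarith
  qed
  then show ?thesis using 3 by linarith
qed

lemma nm_inverse: "x \<noteq> 0 \<Longrightarrow> nm (inverse x) = inverse (nm x)"
  using nm_mult[of x "inverse x"] by (simp add: field_simps)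

lemma nm_power: "nm (x ^ n) = nm x ^ n"
  by (induction n) (simp_all add: nm_mult)

lemma cont_nm: "continuous_on UNIV nm"
proof -
  have "nm = (\<lambda>x. dist x 0)" using nm_dist by (auto simp: fun_eq_iff)
  then show ?thesis by (auto intro!: continuous_intros)
qed

lemma meas_nm[measurable]: "(f :: 'b \<Rightarrow> 'k) \<in> borel_measurable N \<Longrightarrow> (\<lambda>w. nm (f w)) \<in> borel_measurable N"
  using borel_measurable_continuous_on[OF cont_nm] by blast

lemma cont_diff: "continuous_on UNIV (\<lambda>p::'k \<times> 'k. fst p - snd p)"
proof -
  have "dist (fst p - snd p) (fst q - snd q) \<le> 1 * dist p q" for p q :: "'k \<times> 'k"
  proof -
    obtain a b c d where pq: "p = (a, b)" "q = (c, d)" by (cases p, cases q) auto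
    have "nm ((a - b) - (c - d)) = nm ((a - c) - (b - d))" by (simp add: algebra_simps)
    also have "\<dots> \<le> max (nm (a - c)) (nm (b - d))"
      using nm_tri[of "a - c" "b - d" 0] nm_sym[of d b] by simp
    also have "\<dots> \<le> dist p q" using pq
      by (simp add: dist_Pair_Pair nm_dist[symmetric] real_sqrt_sum_squares_ge1 real_sqrt_sum_squares_ge2)
    finally show ?thesis using pq by (simp add: nm_dist)
  qed
  then have "lipschitz_on 1 UNIV (\<lambda>p::'k \<times> 'k. fst p - snd p)" by (auto intro: lipschitz_onI)
  then show ?thesis using lipschitz_on_continuous_on by blast
qed

lemma meas_diff[measurable]:
  fixes f g :: "'b \<Rightarrow> 'k"
  assumes "f \<in> borel_measurable N" "g \<in> borel_measurable N"
  shows "(\<lambda>w. f w - g w) \<in> borel_measurable N"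
  using borel_measurable_continuous_Pair[OF assms, of "\<lambda>x y. x - y"] cont_diff by simp

lemma small_elem: "\<exists>z. 0 < nm z \<and> nm z < 1"
proof -
  obtain x where x: "nm x \<noteq> 0" "nm x \<noteq> 1" using lf by (auto simp: local_field_abs_def)
  show ?thesis
  proof (cases "nm x < 1")
    case True
    have "0 < nm x" using x(1) nm_nonneg[of x] by linarith
    then show ?thesis using True by blast
  next
    case False
    then have "nm x > 1" using x by auto
    then show ?thesis using x nm_inverse[of x]
      by (intro exI[of _ "inverse x"]) (auto simp: inverse_less_1_iff)
  qed
qed

lemma arb_small: "e > 0 \<Longrightarrow> \<exists>z. 0 < nm z \<and> nm z < e"
proof -
  assume e: "e > 0"
  obtain z where z: "0 < nm z" "nm z < 1" using small_elem by blast
  obtain n where "nm z ^ n < e" using real_arch_pow_inv[OF e z(2)] by blast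
  then show ?thesis using z by (intro exI[of _ "z ^ n"]) (simp add: nm_power)
qed

lemma arb_large: "\<exists>z. nm z > R"
proof -
  have "1 / max R 1 > 0" by simp
  then obtain z where z: "0 < nm z" "nm z < 1 / (max R 1)" using arb_small[of "1 / max R 1"] by blast
  have "z \<noteq> 0" using z by auto
  have "nm (inverse z) = inverse (nm z)" using nm_inverse[OF \<open>z \<noteq> 0\<close>] .
  moreover have "inverse (1 / max R 1) < inverse (nm z)" by (rule less_imp_inverse_less[OF z(2) z(1)])
  then have "inverse (nm z) > max R 1" by simp
  ultimately show ?thesis by (intro exI[of _ "inverse z"]) auto
qed

end

context lf
begin

lemma lf_compact: "\<exists>e>0. compact (cball (0::'k) e)"
  using lf by (simp add: local_field_abs_def)

lemma lf_complete:
  fixes f :: "nat \<Rightarrow> 'k"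
  assumes "Cauchy f"
  shows "convergent f"
proof -
  obtain e where e: "e > 0" "compact (cball (0::'k) e)" using lf_compact by blast
  obtain N where N: "\<forall>m\<ge>N. \<forall>n\<ge>N. dist (f m) (f n) < e" using assms e(1) unfolding Cauchy_def by blast
  define g where "g n = f (n + N) - f N" for n
  have gin: "\<forall>n. g n \<in> cball 0 e"
  proof
    fix n
    have "dist 0 (g n) = nm (f (n + N) - f N)" using nm_sym[of "f N" "f (n + N)"] by (simp add: nm_dist g_def)
    also have "\<dots> = dist (f (n + N)) (f N)" by (simp add: nm_dist)
    also have "\<dots> < e" using N by simp
    finally show "g n \<in> cball 0 e" by simp
  qed
  have "Cauchy g"
    unfolding Cauchy_def
  proof (intro allI impI)
    fix r :: real assume "r > 0"
    then obtain K where K: "\<forall>m\<ge>K. \<forall>n\<ge>K. dist (f m) (f n) < r" using assms unfolding Cauchy_def by blast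
    have "\<forall>m\<ge>K. \<forall>n\<ge>K. dist (g m) (g n) < r"
    proof (intro allI impI)
      fix m n assume "m \<ge> K" "n \<ge> K"
      have "dist (g m) (g n) = nm (f (m + N) - f (n + N))" by (simp add: nm_dist g_def)
      also have "\<dots> = dist (f (m + N)) (f (n + N))" by (simp add: nm_dist)
      also have "\<dots> < r" using K \<open>m \<ge> K\<close> \<open>n \<ge> K\<close> by simp
      finally show "dist (g m) (g n) < r" .
    qed
    then show "\<exists>M. \<forall>m\<ge>M. \<forall>n\<ge>M. dist (g m) (g n) < r" by blast
  qed
  have "Topological_Spaces.complete (cball (0::'k) e)" using compact_imp_complete[OF e(2)] .
  then obtain l where l: "g \<longlonglongrightarrow> l" using gin \<open>Cauchy g\<close> unfolding Real_Vector_Spaces.complete_def by blast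
  have "(\<lambda>n. f (n + N)) \<longlonglongrightarrow> l + f N"
    unfolding lim_sequentially
  proof (intro allI impI)
    fix r :: real assume "r > 0"
    then obtain K where K: "\<forall>n\<ge>K. dist (g n) l < r" using l unfolding lim_sequentially by blast
    have "dist (f (n + N)) (l + f N) = dist (g n) l" for n
      by (simp add: nm_dist g_def algebra_simps)
    then show "\<exists>K. \<forall>n\<ge>K. dist (f (n + N)) (l + f N) < r" using K by auto
  qed
  then have "f \<longlonglongrightarrow> l + f N" by (rule LIMSEQ_offset)
  then show ?thesis by (auto simp: convergent_def)
qed

lemma fin_vals_e:
  assumes e: "compact (cball (0::'k) e)" and a: "a > 0"
  shows "finite {v. \<exists>x. v = nm x \<and> a \<le> v \<and> v \<le> e}"
proof (rule ccontr)
  let ?S = "{v. \<exists>x. v = nm x \<and> a \<le> v \<and> v \<le> e}"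
  assume "infinite ?S"
  then obtain f :: "nat \<Rightarrow> real" where f: "inj f" "range f \<subseteq> ?S"
    using infinite_countable_subset by blast
  then have "\<forall>n. \<exists>x. f n = nm x \<and> a \<le> f n \<and> f n \<le> e" by auto
  then obtain x where x: "\<And>n. f n = nm (x n) \<and> a \<le> f n \<and> f n \<le> e" by metis
  have "nm (x n) \<le> e" for n using x[of n] by simp
  then have xin: "\<forall>n. x n \<in> cball 0 e" by (simp add: nm_dist)
  have "seq_compact (cball (0::'k) e)" using e compact_imp_seq_compact by blast
  then obtain l r where r: "strict_mono r" "(x \<circ> r) \<longlonglongrightarrow> l"
    using xin unfolding seq_compact_def by blast
  have "l \<noteq> 0"
  proof
    assume "l = 0"
    then obtain N where N: "\<forall>n\<ge>N. dist ((x \<circ> r) n) 0 < a" using r(2) a unfolding lim_sequentially by blast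
    have "dist ((x \<circ> r) N) 0 = f (r N)" using x by (simp add: nm_dist)
    then show False using N x[of "r N"] by auto
  qed
  then have "nm l > 0" by simp
  then obtain N where N: "\<forall>n\<ge>N. dist ((x \<circ> r) n) l < nm l" using r(2) unfolding lim_sequentially by blast
  have "f (r n) = nm l" if "n \<ge> N" for n
    using N that x[of "r n"] nm_eq_of_close[of "x (r n)" l] by (simp add: nm_dist)
  then have "f (r N) = f (r (Suc N))" by simp
  moreover have "r N < r (Suc N)" using r(1) by (simp add: strict_mono_def)
  then have "r N \<noteq> r (Suc N)" by simp
  ultimately show False using f(1) by (simp add: inj_def)
qed

lemma fin_vals:
  assumes r: "r > 0"
  shows "finite {v \<in> range nm. r \<le> v \<and> v \<le> R}"
proof -
  let ?S = "{v \<in> range nm. r \<le> v \<and> v \<le> R}"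
  obtain e where e: "e > 0" "compact (cball (0::'k) e)" using lf_compact by blast
  have "e / max R 1 > 0" using e by simp
  then obtain c where c: "0 < nm c" "nm c < e / max R 1" using arb_small by blast
  have "(\<lambda>v. nm c * v) ` ?S \<subseteq> {v. \<exists>x. v = nm x \<and> nm c * r \<le> v \<and> v \<le> e}"
  proof
    fix w assume "w \<in> (\<lambda>v. nm c * v) ` ?S"
    then obtain x where x: "w = nm c * nm x" "r \<le> nm x" "nm x \<le> R" by auto
    have "nm c * nm x \<le> nm c * R" using x c by (simp add: mult_left_mono)
    also have "\<dots> \<le> (e / max R 1) * R" using c x r by (intro mult_right_mono) auto
    also have "\<dots> \<le> (e / max R 1) * max R 1" using e by (intro mult_left_mono) auto
    also have "\<dots> = e" by simp
    finally have "w \<le> e" using x by simp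
    moreover have "nm c * r \<le> w" using x c by (simp add: mult_left_mono)
    moreover have "w = nm (c * x)" using x by (simp add: nm_mult)
    ultimately show "w \<in> {v. \<exists>x. v = nm x \<and> nm c * r \<le> v \<and> v \<le> e}" by blast
  qed
  moreover have "finite {v. \<exists>x. v = nm x \<and> nm c * r \<le> v \<and> v \<le> e}"
    using fin_vals_e[OF e(2)] c r by simp
  ultimately have "finite ((\<lambda>v. nm c * v) ` ?S)" by (rule finite_subset)
  moreover have "inj_on (\<lambda>v. nm c * v) ?S" using c by (auto simp: inj_on_def)
  ultimately show ?thesis using finite_imageD by blast
qed

lemma countable_vals: "countable (range nm)"
proof -
  have "range nm \<subseteq> {0} \<union> (\<Union>n. {v \<in> range nm. 1 / real (Suc n) \<le> v \<and> v \<le> real (Suc n)})"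
  proof
    fix v assume v: "v \<in> range nm"
    show "v \<in> {0} \<union> (\<Union>n. {v \<in> range nm. 1 / real (Suc n) \<le> v \<and> v \<le> real (Suc n)})"
    proof (cases "v = 0")
      case False
      then have "v > 0" using v by auto
      obtain n where n: "max v (1 / v) \<le> real n" using real_arch_simple by blast
      then have "v \<le> real (Suc n)" "1 / v \<le> real (Suc n)" by auto
      have "1 / real (Suc n) \<le> 1 / (1 / v)"
        using \<open>1 / v \<le> real (Suc n)\<close> \<open>v > 0\<close> by (intro divide_left_mono) auto
      then have "1 / real (Suc n) \<le> v" by simp
      then show ?thesis using v \<open>v \<le> real (Suc n)\<close> by blast
    qed auto
  qed
  moreover have "countable ({0} \<union> (\<Union>n. {v \<in> range nm. 1 / real (Suc n) \<le> v \<and> v \<le> real (Suc n)}))"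
  proof -
    have "finite {v \<in> range nm. 1 / real (Suc n) \<le> v \<and> v \<le> real (Suc n)}" for n
      by (rule fin_vals) simp
    then have "countable {v \<in> range nm. 1 / real (Suc n) \<le> v \<and> v \<le> real (Suc n)}" for n
      by (rule countable_finite)
    then show ?thesis by (intro countable_Un countable_UN) auto
  qed
  ultimately show ?thesis using countable_subset by blast
qed

lemma dense_seq: "\<exists>d::nat \<Rightarrow> 'k. d 0 = 0 \<and> (\<forall>x e. e > 0 \<longrightarrow> (\<exists>n. nm (x - d n) < e))"
proof -
  obtain D :: "'k set" where "countable D" and D: "\<And>X. open X \<Longrightarrow> X \<noteq> {} \<Longrightarrow> \<exists>d\<in>D. d \<in> X"
    by (erule countable_dense_setE)
  define d where "d n = (if n = 0 then 0 else from_nat_into D (n - 1))" for n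
  have "\<exists>n. nm (x - d n) < e" if epos: "e > 0" for x e
  proof -
    have "\<exists>y\<in>D. y \<in> ball x e" using D[of "ball x e"] epos by auto
    then obtain y where "y \<in> D" "y \<in> ball x e" by blast
    then obtain i where "from_nat_into D i = y" using from_nat_into_surj[OF \<open>countable D\<close>] by blast
    then have "d (Suc i) = y" by (simp add: d_def)
    moreover have "nm (x - y) < e" using \<open>y \<in> ball x e\<close> by (simp add: nm_dist)
    ultimately show ?thesis by metis
  qed
  moreover have "d 0 = 0" by (simp add: d_def)
  ultimately show ?thesis by blast
qed

end

lemma pow_root: "0 \<le> (K::real) \<Longrightarrow> p \<ge> 1 \<Longrightarrow> (K ^ p) powr (1 / real p) = K"
proof -
  assume K: "0 \<le> K" and p: "p \<ge> 1"
  show ?thesis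
  proof (cases "K = 0")
    case True then show ?thesis using p by simp
  next
    case False
    then have "K > 0" using K by simp
    then have "K ^ p = K powr (real p)" by (simp add: powr_realpow)
    then show ?thesis using p \<open>K > 0\<close> by (simp add: powr_powr)
  qed
qed

locale ce = prob_space M for M :: "'a measure" +
  fixes G :: "'a measure"
  assumes sub: "subalgebra M G"
begin

sublocale sf: sigma_finite_subalgebra M G
  by (rule sigma_finite_subalgebra.intro[OF sub])
    (use finite_measure_restr_to_subalg[OF sub finite_measure_axioms] in \<open>simp add: finite_measure_def\<close>)

definition Cp :: "('a \<Rightarrow> real) \<Rightarrow> nat \<Rightarrow> 'a \<Rightarrow> real" where
  "Cp S p \<omega> = real_cond_exp M G (\<lambda>x. S x ^ p) \<omega> powr (1 / real p)"

abbreviation C :: "('a \<Rightarrow> real) \<Rightarrow> 'a \<Rightarrow> real" where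
  "C \<equiv> cond_ess_sup M G"

lemma C_def': "C S \<omega> = (SUP p\<in>{1..}. Cp S p \<omega>)"
  by (simp add: cond_ess_sup_def Cp_def)

definition bnd :: "('a \<Rightarrow> real) \<Rightarrow> real \<Rightarrow> bool" where
  "bnd S K \<longleftrightarrow> S \<in> borel_measurable M \<and> (AE x in M. 0 \<le> S x \<and> S x \<le> K)"

lemma meas_G_M: "f \<in> borel_measurable G \<Longrightarrow> f \<in> borel_measurable M"
  using measurable_from_subalg[OF sub] by blast

lemma sets_G_M: "A \<in> sets G \<Longrightarrow> A \<in> sets M"
  using sub by (auto simp: subalgebra_def)

lemma space_G: "space G = space M"
  using sub by (auto simp: subalgebra_def)

lemma bnd_K: "bnd S K \<Longrightarrow> 0 \<le> K"
proof -
  assume "bnd S K"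
  then have "AE x in M. 0 \<le> S x \<and> S x \<le> K" by (simp add: bnd_def)
  then have "AE x in M. 0 \<le> K" by eventually_elim linarith
  then show "0 \<le> K" by simp
qed

lemma bnd_int: "bnd S K \<Longrightarrow> integrable M (\<lambda>x. S x ^ p)"
proof -
  assume b: "bnd S K"
  then have [measurable]: "S \<in> borel_measurable M" by (simp add: bnd_def)
  have "AE x in M. 0 \<le> S x \<and> S x \<le> K" using b by (simp add: bnd_def)
  then have "AE x in M. norm (S x ^ p) \<le> K ^ p"
    by eventually_elim (simp add: power_mono)
  then show ?thesis by (intro integrable_const_bound[where B="K ^ p"]) auto
qed

lemma rce_const: "AE x in M. real_cond_exp M G (\<lambda>x. c) x = c"
  by (rule sf.real_cond_exp_F_meas) auto

lemma rce_pow_bounds: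
  assumes b: "bnd S K"
  shows "AE x in M. \<forall>p. 0 \<le> real_cond_exp M G (\<lambda>x. S x ^ p) x \<and> real_cond_exp M G (\<lambda>x. S x ^ p) x \<le> K ^ p"
  unfolding AE_all_countable
proof
  fix p
  have [measurable]: "S \<in> borel_measurable M" using b by (simp add: bnd_def)
  have ae: "AE x in M. 0 \<le> S x \<and> S x \<le> K" using b by (simp add: bnd_def)
  have 1: "AE x in M. 0 \<le> real_cond_exp M G (\<lambda>x. S x ^ p) x"
    by (rule sf.real_cond_exp_pos) (use ae in \<open>auto elim: eventually_mono\<close>)
  have 2: "AE x in M. real_cond_exp M G (\<lambda>x. S x ^ p) x \<le> real_cond_exp M G (\<lambda>x. K ^ p) x"
    by (rule sf.real_cond_exp_mono) (use ae bnd_int[OF b] in \<open>auto elim: eventually_mono simp: power_mono\<close>)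
  show "AE x in M. 0 \<le> real_cond_exp M G (\<lambda>x. S x ^ p) x \<and> real_cond_exp M G (\<lambda>x. S x ^ p) x \<le> K ^ p"
    using 1 2 rce_const[of "K ^ p"] by eventually_elim auto
qed

lemma Cp_bounds:
  assumes b: "bnd S K"
  shows "AE x in M. \<forall>p\<ge>1. 0 \<le> Cp S p x \<and> Cp S p x \<le> K"
  using rce_pow_bounds[OF b]
proof eventually_elim
  case (elim x)
  show ?case
  proof (intro allI impI conjI)
    fix p :: nat assume p: "p \<ge> 1"
    show "0 \<le> Cp S p x" by (simp add: Cp_def)
    have "Cp S p x \<le> (K ^ p) powr (1 / real p)"
      unfolding Cp_def using elim by (intro powr_mono2) auto
    also have "\<dots> = K" using pow_root[OF bnd_K[OF b] p] .
    finally show "Cp S p x \<le> K" .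
  qed
qed

lemma C_bounds:
  assumes b: "bnd S K"
  shows "AE x in M. (\<forall>p\<ge>1. Cp S p x \<le> C S x) \<and> 0 \<le> C S x \<and> C S x \<le> K"
  using Cp_bounds[OF b]
proof eventually_elim
  case (elim x)
  have bdd: "bdd_above ((\<lambda>p. Cp S p x) ` {1..})" using elim by (auto intro!: bdd_aboveI[where M=K])
  have up: "Cp S p x \<le> C S x" if "p \<ge> 1" for p
    unfolding C_def' using that bdd by (intro cSUP_upper) auto
  moreover have "0 \<le> C S x" using up[of 1] elim by force
  moreover have "C S x \<le> K" unfolding C_def' using elim by (intro cSUP_least) auto
  ultimately show ?case by blast
qed

lemma Cp_meas[measurable]: "Cp S p \<in> borel_measurable G"
  unfolding Cp_def[abs_def] by measurable

lemma C_meas[measurable]: "C S \<in> borel_measurable G"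
proof -
  have eq: "C S = (\<lambda>\<omega>. - (INF p\<in>{1..}. - Cp S p \<omega>))"
    by (auto simp: fun_eq_iff C_def' Inf_real_def image_image)
  show ?thesis unfolding eq by measurable
qed

lemma C_measM[measurable]: "C S \<in> borel_measurable M"
  using meas_G_M[OF C_meas] .

lemma C_mono:
  assumes bS: "bnd S K" and bT: "bnd T L" and le: "AE x in M. S x \<le> T x"
  shows "AE x in M. C S x \<le> C T x"
proof -
  have [measurable]: "S \<in> borel_measurable M" "T \<in> borel_measurable M" using bS bT by (auto simp: bnd_def)
  have aeS: "AE x in M. 0 \<le> S x \<and> S x \<le> K" using bS by (simp add: bnd_def)
  have "AE x in M. \<forall>p. real_cond_exp M G (\<lambda>x. S x ^ p) x \<le> real_cond_exp M G (\<lambda>x. T x ^ p) x"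
    unfolding AE_all_countable
  proof
    fix p
    show "AE x in M. real_cond_exp M G (\<lambda>x. S x ^ p) x \<le> real_cond_exp M G (\<lambda>x. T x ^ p) x"
    proof (rule sf.real_cond_exp_mono)
      show "AE x in M. S x ^ p \<le> T x ^ p" using le aeS by eventually_elim (auto intro: power_mono)
    qed (use bnd_int[OF bS] bnd_int[OF bT] in auto)
  qed
  then show ?thesis using rce_pow_bounds[OF bS] C_bounds[OF bT]
  proof eventually_elim
    case (elim x)
    show ?case unfolding C_def'[of S]
    proof (rule cSUP_least)
      show "{1::nat..} \<noteq> {}" by auto
      fix p :: nat assume "p \<in> {1..}"
      then have "Cp S p x \<le> Cp T p x" unfolding Cp_def using elim by (intro powr_mono2) auto
      also have "\<dots> \<le> C T x" using elim \<open>p \<in> {1..}\<close> by auto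
      finally show "Cp S p x \<le> C T x" .
    qed
  qed
qed

lemma C_Gmeas:
  assumes gm[measurable]: "g \<in> borel_measurable G" and ae: "AE x in M. 0 \<le> g x \<and> g x \<le> K"
  shows "AE x in M. C g x = g x"
proof -
  have [measurable]: "g \<in> borel_measurable M" using meas_G_M[OF gm] .
  have b: "bnd g K" using ae by (simp add: bnd_def)
  have "AE x in M. \<forall>p. real_cond_exp M G (\<lambda>x. g x ^ p) x = g x ^ p"
    unfolding AE_all_countable
  proof
    fix p
    show "AE x in M. real_cond_exp M G (\<lambda>x. g x ^ p) x = g x ^ p"
      by (rule sf.real_cond_exp_F_meas) (use bnd_int[OF b] in auto)
  qed
  then show ?thesis using ae
  proof eventually_elim
    case (elim x)
    have "C g x = (SUP p\<in>{1::nat..}. g x)" unfolding C_def'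
      by (rule SUP_cong) (use elim pow_root in \<open>auto simp: Cp_def\<close>)
    then show ?case by simp
  qed
qed

lemma C_const: "0 \<le> c \<Longrightarrow> AE x in M. C (\<lambda>_. c) x = c"
  by (rule C_Gmeas[where K=c]) auto

end

lemma sq_root: "0 \<le> (y::real) \<Longrightarrow> p \<ge> 1 \<Longrightarrow> (y ^ 2) powr (1 / real (2 * p)) = y powr (1 / real p)"
proof (cases "y = 0")
  case False
  assume y: "0 \<le> y" and p: "p \<ge> 1"
  then have "y > 0" using False by simp
  have "(y ^ 2) powr (1 / real (2 * p)) = (y powr (real 2)) powr (1 / real (2 * p))"
    using powr_realpow[of y 2] \<open>y > 0\<close> by simp
  also have "\<dots> = y powr (real 2 * (1 / real (2 * p)))" by (rule powr_powr)
  also have "real 2 * (1 / real (2 * p)) = 1 / real p" using p by simp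
  finally show ?thesis .
qed simp

lemma two_powr_lim: "p \<ge> 1 \<Longrightarrow> (\<lambda>j. 2 powr (1 / real (2 ^ j * p)) * m) \<longlonglongrightarrow> (m::real)"
proof -
  assume p: "p \<ge> 1"
  have sm: "strict_mono (\<lambda>j::nat. 2 ^ j * p)" using p by (auto simp: strict_mono_def)
  have "(\<lambda>n. 1 / real n) \<longlonglongrightarrow> 0" by (rule lim_1_over_n)
  from LIMSEQ_subseq_LIMSEQ[OF this sm] have "(\<lambda>j. 1 / real (2 ^ j * p)) \<longlonglongrightarrow> 0" by (simp add: o_def)
  then have "(\<lambda>j. (2::real) powr (1 / real (2 ^ j * p))) \<longlonglongrightarrow> 2 powr 0"
    by (intro tendsto_powr) auto
  then have "(\<lambda>j. (2::real) powr (1 / real (2 ^ j * p)) * m) \<longlonglongrightarrow> 2 powr 0 * m"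
    by (intro tendsto_mult_right)
  then show ?thesis by simp
qed

context ce
begin

lemma Cp_double:
  assumes b: "bnd S K"
  shows "AE x in M. \<forall>p\<ge>1. Cp S p x \<le> Cp S (2 * p) x"
proof -
  have [measurable]: "S \<in> borel_measurable M" using b by (simp add: bnd_def)
  have "AE x in M. 1 \<le> p \<longrightarrow> Cp S p x \<le> Cp S (2 * p) x" for p
  proof -
    have eq: "(\<lambda>x. (S x ^ p)\<^sup>2) = (\<lambda>x. S x ^ (2 * p))" by (auto simp: fun_eq_iff power_mult[symmetric] mult.commute)
    have "AE x in M. (real_cond_exp M G (\<lambda>x. S x ^ p) x)\<^sup>2 \<le> real_cond_exp M G (\<lambda>x. (S x ^ p)\<^sup>2) x"
      by (rule sf.real_cond_exp_jensens_inequality(2)[where I=UNIV])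
        (use bnd_int[OF b] convex_power2 in \<open>auto simp: eq\<close>)
    then show ?thesis using rce_pow_bounds[OF b]
    proof eventually_elim
      case (elim x)
      show ?case
      proof
        assume p: "1 \<le> p"
        have "Cp S p x = ((real_cond_exp M G (\<lambda>x. S x ^ p) x)\<^sup>2) powr (1 / real (2 * p))"
          unfolding Cp_def using elim p sq_root[of "real_cond_exp M G (\<lambda>x. S x ^ p) x" p] by simp
        also have "\<dots> \<le> real_cond_exp M G (\<lambda>x. S x ^ (2 * p)) x powr (1 / real (2 * p))"
          using elim by (intro powr_mono2) (auto simp: eq)
        also have "\<dots> = Cp S (2 * p) x" by (simp add: Cp_def)
        finally show "Cp S p x \<le> Cp S (2 * p) x" .
      qed
    qed
  qed
  then show ?thesis unfolding AE_all_countable by blast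
qed

lemma Cp_pow2:
  assumes b: "bnd S K"
  shows "AE x in M. \<forall>p\<ge>1. \<forall>j. Cp S p x \<le> Cp S (2 ^ j * p) x"
  using Cp_double[OF b]
proof eventually_elim
  case (elim x)
  show ?case
  proof (intro allI impI)
    fix p j :: nat assume p: "1 \<le> p"
    show "Cp S p x \<le> Cp S (2 ^ j * p) x"
    proof (induction j)
      case (Suc j)
      have "1 \<le> 2 ^ j * p" using p by simp
      then have "Cp S (2 ^ j * p) x \<le> Cp S (2 * (2 ^ j * p)) x" using elim by blast
      then show ?case using Suc by (simp add: mult.assoc)
    qed simp
  qed
qed

lemma C_max:
  assumes bS: "bnd S K" and bT: "bnd T L"
  shows "AE x in M. C (\<lambda>x. max (S x) (T x)) x \<le> max (C S x) (C T x)"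
proof -
  have [measurable]: "S \<in> borel_measurable M" "T \<in> borel_measurable M" using bS bT by (auto simp: bnd_def)
  define W where "W x = max (S x) (T x)" for x
  have [measurable]: "W \<in> borel_measurable M" unfolding W_def by measurable
  have aeS: "AE x in M. 0 \<le> S x \<and> S x \<le> K" using bS by (simp add: bnd_def)
  have aeT: "AE x in M. 0 \<le> T x \<and> T x \<le> L" using bT by (simp add: bnd_def)
  have "AE x in M. 0 \<le> W x \<and> W x \<le> max K L" using aeS aeT by eventually_elim (auto simp: W_def)
  then have bW: "bnd W (max K L)" unfolding bnd_def by simp
  have "AE x in M. \<forall>p. real_cond_exp M G (\<lambda>x. W x ^ p) x \<le> real_cond_exp M G (\<lambda>x. S x ^ p) x + real_cond_exp M G (\<lambda>x. T x ^ p) x"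
    unfolding AE_all_countable
  proof
    fix p
    have 1: "AE x in M. real_cond_exp M G (\<lambda>x. W x ^ p) x \<le> real_cond_exp M G (\<lambda>x. S x ^ p + T x ^ p) x"
    proof (rule sf.real_cond_exp_mono)
      show "AE x in M. W x ^ p \<le> S x ^ p + T x ^ p" using aeS aeT
        by eventually_elim (auto simp: W_def max_def)
    qed (use bnd_int[OF bS] bnd_int[OF bT] bnd_int[OF bW] in auto)
    have 2: "AE x in M. real_cond_exp M G (\<lambda>x. S x ^ p + T x ^ p) x = real_cond_exp M G (\<lambda>x. S x ^ p) x + real_cond_exp M G (\<lambda>x. T x ^ p) x"
      by (rule sf.real_cond_exp_add) (use bnd_int[OF bS] bnd_int[OF bT] in auto)
    show "AE x in M. real_cond_exp M G (\<lambda>x. W x ^ p) x \<le> real_cond_exp M G (\<lambda>x. S x ^ p) x + real_cond_exp M G (\<lambda>x. T x ^ p) x"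
      using 1 2 by eventually_elim simp
  qed
  then have "AE x in M. C W x \<le> max (C S x) (C T x)"
    using rce_pow_bounds[OF bS] rce_pow_bounds[OF bT] rce_pow_bounds[OF bW] C_bounds[OF bS] C_bounds[OF bT] Cp_pow2[OF bW]
  proof eventually_elim
    case (elim x)
    define m where "m = max (C S x) (C T x)"
    have m0: "0 \<le> m" using elim by (auto simp: m_def)
    have step: "Cp W q x \<le> 2 powr (1 / real q) * m" if q: "q \<ge> 1" for q
    proof -
      define a where "a = real_cond_exp M G (\<lambda>x. S x ^ q) x"
      define b where "b = real_cond_exp M G (\<lambda>x. T x ^ q) x"
      have a0: "0 \<le> a" and b0: "0 \<le> b" using elim by (auto simp: a_def b_def)
      have "Cp W q x \<le> (a + b) powr (1 / real q)"
        unfolding Cp_def a_def b_def using elim by (intro powr_mono2) auto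
      also have "\<dots> \<le> (2 * max a b) powr (1 / real q)"
        using a0 b0 by (intro powr_mono2) auto
      also have "\<dots> = 2 powr (1 / real q) * max a b powr (1 / real q)"
        using a0 b0 by (simp add: powr_mult)
      also have "max a b powr (1 / real q) = max (Cp S q x) (Cp T q x)"
        unfolding Cp_def a_def[symmetric] b_def[symmetric]
      proof (cases "a \<le> b")
        case True
        then have "a powr (1 / real q) \<le> b powr (1 / real q)" using a0 by (intro powr_mono2) auto
        then show "max a b powr (1 / real q) = max (a powr (1 / real q)) (b powr (1 / real q))"
          using True by (simp add: max.absorb2)
      next
        case False
        then have "b powr (1 / real q) \<le> a powr (1 / real q)" using b0 by (intro powr_mono2) auto
        then show "max a b powr (1 / real q) = max (a powr (1 / real q)) (b powr (1 / real q))"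
          using False by (simp add: max.absorb1)
      qed
      also have "\<dots> \<le> m" using elim q by (auto simp: m_def)
      finally show ?thesis by (simp add: mult_left_mono)
    qed
    have "Cp W p x \<le> m" if p: "p \<ge> 1" for p
    proof (rule LIMSEQ_le_const[OF two_powr_lim[OF p]])
      have "Cp W p x \<le> 2 powr (1 / real (2 ^ j * p)) * m" for j
      proof -
        have "Cp W p x \<le> Cp W (2 ^ j * p) x" using elim p by blast
        also have "\<dots> \<le> 2 powr (1 / real (2 ^ j * p)) * m" using step[of "2 ^ j * p"] p by simp
        finally show ?thesis .
      qed
      then show "\<exists>N. \<forall>n\<ge>N. Cp W p x \<le> 2 powr (1 / real (2 ^ n * p)) * m" by blast
    qed
    then show ?case unfolding C_def'[of W] m_def[symmetric] by (intro cSUP_least) auto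
  qed
  then show ?thesis by (simp add: W_def[abs_def])
qed

end

context ce
begin

lemma bnd_ind:
  assumes b: "bnd S K" and A[measurable]: "A \<in> sets M"
  shows "bnd (\<lambda>x. indicator A x * S x) K"
proof -
  have [measurable]: "S \<in> borel_measurable M" using b by (simp add: bnd_def)
  have K: "0 \<le> K" using bnd_K[OF b] .
  have "AE x in M. 0 \<le> S x \<and> S x \<le> K" using b by (simp add: bnd_def)
  then have "AE x in M. 0 \<le> indicator A x * S x \<and> indicator A x * S x \<le> K"
    by eventually_elim (use K in \<open>auto simp: indicator_def\<close>)
  then show ?thesis unfolding bnd_def by simp
qed

lemma C_loc:
  assumes b: "bnd S K" and A: "A \<in> sets G"
  shows "AE x in M. C (\<lambda>x. indicator A x * S x) x = indicator A x * C S x"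
proof -
  have [measurable]: "S \<in> borel_measurable M" using b by (simp add: bnd_def)
  have AM[measurable]: "A \<in> sets M" using sets_G_M[OF A] .
  have [measurable]: "indicator A \<in> borel_measurable G" using A by simp
  have "AE x in M. \<forall>p. 1 \<le> p \<longrightarrow> real_cond_exp M G (\<lambda>x. (indicator A x * S x) ^ p) x = indicator A x * real_cond_exp M G (\<lambda>x. S x ^ p) x"
    unfolding AE_all_countable
  proof
    fix p :: nat
    show "AE x in M. 1 \<le> p \<longrightarrow> real_cond_exp M G (\<lambda>x. (indicator A x * S x) ^ p) x = indicator A x * real_cond_exp M G (\<lambda>x. S x ^ p) x"
    proof (cases "1 \<le> p")
      case True
      have eq: "(\<lambda>x. (indicator A x * S x) ^ p) = (\<lambda>x. indicator A x * S x ^ p)"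
        using True by (auto simp: fun_eq_iff indicator_def)
      have "AE x in M. real_cond_exp M G (\<lambda>x. indicator A x * S x ^ p) x = indicator A x * real_cond_exp M G (\<lambda>x. S x ^ p) x"
        by (rule sf.real_cond_exp_mult) (use bnd_int[OF bnd_ind[OF b AM], of p] in \<open>auto simp: eq\<close>)
      then show ?thesis by (simp add: eq)
    qed simp
  qed
  then show ?thesis
  proof eventually_elim
    case (elim x)
    have cp: "Cp (\<lambda>x. indicator A x * S x) p x = indicator A x * Cp S p x" if "1 \<le> p" for p
      using elim that by (auto simp: Cp_def indicator_def)
    show ?case
    proof (cases "x \<in> A")
      case True
      have "C (\<lambda>x. indicator A x * S x) x = (SUP p\<in>{1..}. Cp S p x)"
        unfolding C_def' by (rule SUP_cong) (use cp True in auto)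
      then show ?thesis using True by (simp add: C_def')
    next
      case False
      have "C (\<lambda>x. indicator A x * S x) x = (SUP p\<in>{1::nat..}. 0)"
        unfolding C_def' by (rule SUP_cong) (use cp False in auto)
      then show ?thesis using False by simp
    qed
  qed
qed

lemma C_loc_eq:
  assumes bS: "bnd S K" and bT: "bnd T L" and A: "A \<in> sets G"
    and eq: "AE x in M. x \<in> A \<longrightarrow> S x = T x"
  shows "AE x in M. x \<in> A \<longrightarrow> C S x = C T x"
proof -
  have AM: "A \<in> sets M" using sets_G_M[OF A] .
  have e2: "AE x in M. indicator A x * S x = indicator A x * T x" using eq
    by eventually_elim (auto simp: indicator_def)
  have 1: "AE x in M. C (\<lambda>x. indicator A x * S x) x \<le> C (\<lambda>x. indicator A x * T x) x"
    by (rule C_mono[OF bnd_ind[OF bS AM] bnd_ind[OF bT AM]]) (use e2 in \<open>auto elim: eventually_mono\<close>)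
  have 2: "AE x in M. C (\<lambda>x. indicator A x * T x) x \<le> C (\<lambda>x. indicator A x * S x) x"
    by (rule C_mono[OF bnd_ind[OF bT AM] bnd_ind[OF bS AM]]) (use e2 in \<open>auto elim: eventually_mono\<close>)
  show ?thesis using 1 2 C_loc[OF bS A] C_loc[OF bT A]
    by eventually_elim (auto simp: indicator_def)
qed

lemma C_lower:
  assumes b: "bnd S K" and B[measurable]: "B \<in> sets M" and t: "0 \<le> t"
    and St: "AE x in M. x \<in> B \<longrightarrow> t \<le> S x"
  shows "AE x in M. 0 < real_cond_exp M G (indicator B) x \<longrightarrow> t \<le> C S x"
proof -
  have [measurable]: "S \<in> borel_measurable M" using b by (simp add: bnd_def)
  have aeS: "AE x in M. 0 \<le> S x \<and> S x \<le> K" using b by (simp add: bnd_def)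
  have intB: "integrable M (indicator B :: 'a \<Rightarrow> real)"
    by (rule integrable_const_bound[where B=1]) (auto simp: indicator_def)
  have "AE x in M. \<forall>p. t ^ p * real_cond_exp M G (indicator B) x \<le> real_cond_exp M G (\<lambda>x. S x ^ p) x"
    unfolding AE_all_countable
  proof
    fix p :: nat
    have 1: "AE x in M. real_cond_exp M G (\<lambda>x. t ^ p * indicator B x) x \<le> real_cond_exp M G (\<lambda>x. S x ^ p) x"
    proof (rule sf.real_cond_exp_mono)
      show "AE x in M. t ^ p * indicator B x \<le> S x ^ p" using aeS St
        by eventually_elim (use t in \<open>auto simp: indicator_def intro: power_mono\<close>)
    qed (use intB bnd_int[OF b] in auto)
    have 2: "AE x in M. real_cond_exp M G (\<lambda>x. t ^ p * indicator B x) x = t ^ p * real_cond_exp M G (indicator B) x"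
      using sf.real_cond_exp_cmult[OF intB, of "t ^ p"] by simp
    show "AE x in M. t ^ p * real_cond_exp M G (indicator B) x \<le> real_cond_exp M G (\<lambda>x. S x ^ p) x"
      using 1 2 by eventually_elim simp
  qed
  then show ?thesis using C_bounds[OF b]
  proof eventually_elim
    case (elim x)
    show ?case
    proof
      define P where "P = real_cond_exp M G (indicator B) x"
      assume P: "0 < real_cond_exp M G (indicator B) x"
      then have P0: "0 < P" by (simp add: P_def)
      have le: "t * P powr (1 / real p) \<le> C S x" if p: "1 \<le> p" for p
      proof -
        have "t * P powr (1 / real p) = (t ^ p) powr (1 / real p) * P powr (1 / real p)"
          using pow_root[OF t p] by simp
        also have "\<dots> = (t ^ p * P) powr (1 / real p)" using P0 t by (simp add: powr_mult)
        also have "\<dots> \<le> Cp S p x" unfolding Cp_def using elim P0 t by (intro powr_mono2) (auto simp: P_def)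
        also have "\<dots> \<le> C S x" using elim p by blast
        finally show ?thesis .
      qed
      have "(\<lambda>n. 1 / real n) \<longlonglongrightarrow> 0" by (rule lim_1_over_n)
      then have "(\<lambda>n. P powr (1 / real n)) \<longlonglongrightarrow> P powr 0" using P0 by (intro tendsto_powr) auto
      then have "(\<lambda>n. t * P powr (1 / real n)) \<longlonglongrightarrow> t * P powr 0" by (intro tendsto_mult_left)
      then have "(\<lambda>n. t * P powr (1 / real n)) \<longlonglongrightarrow> t" using P0 by simp
      then show "t \<le> C S x"
        by (rule LIMSEQ_le_const2) (use le in \<open>auto intro!: exI[of _ 1]\<close>)
    qed
  qed
qed

end

context ce
begin

lemma C_gap:
  assumes b: "bnd S K" and v: "0 \<le> v1" "v1 < v2"
    and gap: "AE x in M. S x \<le> v1 \<or> v2 \<le> S x"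
  shows "AE x in M. \<not> (v1 < C S x \<and> C S x < v2)"
proof -
  have [measurable]: "S \<in> borel_measurable M" using b by (simp add: bnd_def)
  have aeS: "AE x in M. 0 \<le> S x \<and> S x \<le> K" using b by (simp add: bnd_def)
  define A where "A = {x \<in> space G. v1 < C S x \<and> C S x < v2}"
  have AG[measurable]: "A \<in> sets G" unfolding A_def by measurable
  have AM[measurable]: "A \<in> sets M" using sets_G_M[OF AG] .
  define B where "B = {x \<in> space M. v2 \<le> S x}"
  have BM[measurable]: "B \<in> sets M" unfolding B_def by measurable
  have intB: "integrable M (indicator B :: 'a \<Rightarrow> real)"
    by (rule integrable_const_bound[where B=1]) (auto simp: indicator_def)
  have L1: "AE x in M. 0 < real_cond_exp M G (indicator B) x \<longrightarrow> v2 \<le> C S x"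
    by (rule C_lower[OF b BM]) (use v in \<open>auto simp: B_def\<close>)
  have Ppos: "AE x in M. 0 \<le> real_cond_exp M G (indicator B) x"
    by (rule sf.real_cond_exp_pos) auto
  have "AE x in M. indicator A x * real_cond_exp M G (indicator B) x = (0::real)"
    using L1 Ppos by eventually_elim (auto simp: A_def indicator_def)
  then have "(\<integral>x. indicator A x * real_cond_exp M G (indicator B) x \<partial>M) = (\<integral>x. 0 \<partial>M)"
    by (intro integral_cong_AE) auto
  then have "(\<integral>x. indicator A x * real_cond_exp M G (indicator B) x \<partial>M) = 0" by simp
  moreover have "(\<integral>x \<in> A. indicator B x \<partial>M) = (\<integral>x \<in> A. real_cond_exp M G (indicator B) x \<partial>M)"
    by (rule sf.real_cond_exp_intA[OF intB AG])
  ultimately have "(\<integral>x. indicator A x * indicator B x \<partial>M) = (0::real)"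
    by (simp add: set_lebesgue_integral_def)
  moreover have "integrable M (\<lambda>x. indicator A x * indicator B x :: real)"
    by (rule integrable_const_bound[where B=1]) (auto simp: indicator_def)
  ultimately have "AE x in M. indicator A x * indicator B x = (0::real)"
    using integral_nonneg_eq_0_iff_AE[of M "\<lambda>x. indicator A x * indicator B x :: real"] by simp
  then have ae1: "AE x in M. x \<in> A \<longrightarrow> S x \<le> v1" using gap
    by eventually_elim (auto simp: indicator_def B_def A_def space_G split: if_splits)
  define T where "T x = min (S x) v1" for x
  have "AE x in M. 0 \<le> T x \<and> T x \<le> K" using aeS by eventually_elim (use v in \<open>auto simp: T_def\<close>)
  then have bT: "bnd T K" unfolding bnd_def T_def by simp
  have "AE x in M. x \<in> A \<longrightarrow> S x = T x" using ae1 by eventually_elim (auto simp: T_def)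
  then have 1: "AE x in M. x \<in> A \<longrightarrow> C S x = C T x" by (rule C_loc_eq[OF b bT AG])
  have bc: "bnd (\<lambda>_. v1) v1" using v by (simp add: bnd_def)
  have "AE x in M. T x \<le> v1" by (simp add: T_def)
  then have 2: "AE x in M. C T x \<le> C (\<lambda>_. v1) x" by (rule C_mono[OF bT bc])
  show ?thesis using 1 2 C_const[OF v(1)] AE_space
    by eventually_elim (auto simp: A_def space_G)
qed

end

locale cl = ce M G + lf nm
  for M :: "'a measure" and G :: "'a measure" and nm :: "'k::{field,metric_space,second_countable_topology} \<Rightarrow> real"
begin

lemma C_vals:
  assumes b: "bnd S K" and Sv: "\<forall>x\<in>space M. S x \<in> range nm"
  shows "AE x in M. C S x \<in> range nm"
proof -
  define V where "V = range nm"
  define P where "P = {(v1, v2). v1 \<in> V \<and> v2 \<in> V \<and> v1 < v2 \<and> (\<forall>v\<in>V. \<not> (v1 < v \<and> v < v2))}"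
  have cV: "countable V" unfolding V_def by (rule countable_vals)
  have "P \<subseteq> V \<times> V" unfolding P_def by auto
  moreover have "countable (V \<times> V)" using cV by (intro countable_SIGMA) auto
  ultimately have cP: "countable P" using countable_subset by blast
  have "\<forall>pr\<in>P. AE x in M. \<not> (fst pr < C S x \<and> C S x < snd pr)"
  proof
    fix pr assume "pr \<in> P"
    then obtain v1 v2 where pr: "pr = (v1, v2)" "v1 \<in> V" "v2 \<in> V" "v1 < v2" "\<forall>v\<in>V. \<not> (v1 < v \<and> v < v2)"
      unfolding P_def by auto
    have v10: "0 \<le> v1" using pr(2) by (auto simp: V_def)
    have "AE x in M. S x \<le> v1 \<or> v2 \<le> S x"
      using AE_space
    proof eventually_elim
      case (elim x)
      then have "S x \<in> V" using Sv by (simp add: V_def)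
      then show ?case using pr(5) by force
    qed
    from C_gap[OF b v10 pr(4) this] show "AE x in M. \<not> (fst pr < C S x \<and> C S x < snd pr)"
      using pr(1) by simp
  qed
  then have ae: "AE x in M. \<forall>pr\<in>P. \<not> (fst pr < C S x \<and> C S x < snd pr)"
    by (subst AE_ball_countable[OF cP])
  show ?thesis using ae C_bounds[OF b]
  proof eventually_elim
    case (elim x)
    define t where "t = C S x"
    show ?case
    proof (rule ccontr)
      assume tV: "C S x \<notin> range nm"
      then have "t \<notin> V" by (simp add: t_def V_def)
      moreover have "0 \<in> V" unfolding V_def by (metis nm_zero rangeI)
      ultimately have "t \<noteq> 0" by auto
      then have t0: "t > 0" using elim by (simp add: t_def)
      obtain z1 where z1: "0 < nm z1" "nm z1 < t" using arb_small[OF t0] by blast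
      obtain z2 where z2: "nm z2 > t" using arb_large by blast
      define F1 where "F1 = {v \<in> V. nm z1 \<le> v \<and> v \<le> t}"
      define F2 where "F2 = {v \<in> V. t \<le> v \<and> v \<le> nm z2}"
      have fF1: "finite F1" unfolding F1_def V_def using fin_vals[OF z1(1)] .
      have fF2: "finite F2" unfolding F2_def V_def using fin_vals[OF t0] .
      have neF1: "nm z1 \<in> F1" using z1 by (auto simp: F1_def V_def)
      have neF2: "nm z2 \<in> F2" using z2 by (auto simp: F2_def V_def)
      define v1 where "v1 = Max F1"
      define v2 where "v2 = Min F2"
      have v1F: "v1 \<in> F1" unfolding v1_def using fF1 neF1 by (intro Max_in) auto
      have v2F: "v2 \<in> F2" unfolding v2_def using fF2 neF2 by (intro Min_in) auto
      have "v1 \<noteq> t" using v1F \<open>t \<notin> V\<close> by (auto simp: F1_def)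
      then have v1t: "v1 < t" using v1F by (auto simp: F1_def)
      have "v2 \<noteq> t" using v2F \<open>t \<notin> V\<close> by (auto simp: F2_def)
      then have v2t: "t < v2" using v2F by (auto simp: F2_def)
      have "\<forall>v\<in>V. \<not> (v1 < v \<and> v < v2)"
      proof (intro ballI notI)
        fix v assume vV: "v \<in> V" and vv: "v1 < v \<and> v < v2"
        show False
        proof (cases "v \<le> t")
          case True
          then have "v \<in> F1" using vV vv v1F by (auto simp: F1_def)
          then have "v \<le> v1" unfolding v1_def using fF1 by simp
          then show False using vv by simp
        next
          case False
          then have "v \<in> F2" using vV vv v2F by (auto simp: F2_def)
          then have "v2 \<le> v" unfolding v2_def using fF2 by simp
          then show False using vv by simp
        qed
      qed
      then have "(v1, v2) \<in> P" using v1F v2F v1t v2t unfolding P_def F1_def F2_def by auto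
      then show False using elim v1t v2t by (force simp: t_def)
    qed
  qed
qed

end

context cl
begin

lemma Linf_bound: "Z \<in> Linf M N nm \<Longrightarrow> \<exists>K\<ge>0. AE x in M. nm (Z x) \<le> K"
proof -
  assume Z: "Z \<in> Linf M N nm"
  define e where "e = norm_inf M nm Z"
  have lt: "e < \<infinity>" using Z by (simp add: Linf_def e_def)
  have ae: "AE x in M. ereal (nm (Z x)) \<le> e" unfolding e_def norm_inf_def by (rule esssup_AE)
  have "AE x in M. nm (Z x) \<le> max 0 (real_of_ereal e)"
    using ae
  proof eventually_elim
    case (elim x)
    show ?case
    proof (cases e)
      case (real r)
      then show ?thesis using elim by simp
    next
      case PInf then show ?thesis using lt by simp
    next
      case MInf then show ?thesis using elim by simp
    qed
  qed
  then show ?thesis by (intro exI[of _ "max 0 (real_of_ereal e)"]) auto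
qed

lemma norm_inf_le:
  assumes [measurable]: "f \<in> borel_measurable M" and ae: "AE x in M. nm (f x) \<le> K"
  shows "norm_inf M nm f \<le> ereal K"
  unfolding norm_inf_def
  by (rule esssup_I) (use ae in \<open>auto elim: eventually_mono\<close>)

lemma Linf_G_intro:
  assumes Z: "Z \<in> borel_measurable G" and ae: "AE x in M. nm (Z x) \<le> K"
  shows "Z \<in> Linf M G nm"
proof -
  have "Z \<in> borel_measurable M" using meas_G_M[OF Z] .
  then have "norm_inf M nm Z \<le> ereal K" using norm_inf_le ae by blast
  then have "norm_inf M nm Z < \<infinity>" using order.strict_trans1[of "norm_inf M nm Z" "ereal K" \<infinity>] by simp
  then show ?thesis using Z by (simp add: Linf_def)
qed

lemma Linf_G_meas: "Z \<in> Linf M G nm \<Longrightarrow> Z \<in> borel_measurable G"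
  by (simp add: Linf_def)

lemma bnd_nm:
  assumes [measurable]: "f \<in> borel_measurable M" and ae: "AE x in M. nm (f x) \<le> K"
  shows "bnd (\<lambda>x. nm (f x)) K"
  unfolding bnd_def using ae by (auto elim: eventually_mono)

lemma bnd_nm_diff:
  assumes [measurable]: "f \<in> borel_measurable M" "g \<in> borel_measurable M"
    and ae1: "AE x in M. nm (f x) \<le> K1" and ae2: "AE x in M. nm (g x) \<le> K2"
  shows "bnd (\<lambda>x. nm (f x - g x)) (max K1 K2)"
proof (rule bnd_nm)
  show "AE x in M. nm (f x - g x) \<le> max K1 K2" using ae1 ae2
  proof eventually_elim
    case (elim x)
    have "nm (f x - g x) \<le> max (nm (f x - 0)) (nm (0 - g x))" by (rule nm_tri)
    then show ?case using elim by auto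
  qed
qed measurable

lemma C_ultra:
  assumes bR: "bnd R K3" and bS: "bnd S K1" and bT: "bnd T K2"
    and le: "AE x in M. R x \<le> max (S x) (T x)"
  shows "AE x in M. C R x \<le> max (C S x) (C T x)"
proof -
  have [measurable]: "S \<in> borel_measurable M" "T \<in> borel_measurable M" using bS bT by (auto simp: bnd_def)
  have "AE x in M. 0 \<le> S x \<and> S x \<le> K1" "AE x in M. 0 \<le> T x \<and> T x \<le> K2" using bS bT by (auto simp: bnd_def)
  then have "AE x in M. 0 \<le> max (S x) (T x) \<and> max (S x) (T x) \<le> max K1 K2" by eventually_elim auto
  then have bW: "bnd (\<lambda>x. max (S x) (T x)) (max K1 K2)" unfolding bnd_def by simp
  show ?thesis using C_mono[OF bR bW le] C_max[OF bS bT] by eventually_elim simp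
qed

end

context cl
begin

lemma inf_facts:
  fixes hh :: "nat \<Rightarrow> real"
  assumes P2: "\<forall>n. 0 \<le> hh n"
  shows "0 \<le> (INF n. hh n)" "\<And>n. (INF n. hh n) \<le> hh n"
    "\<And>e. e > 0 \<Longrightarrow> hh (LEAST n. hh n < (INF n. hh n) + e) < (INF n. hh n) + e"
proof -
  have bdd: "bdd_below (range hh)" using P2 by (auto intro: bdd_belowI[where m=0])
  show "0 \<le> (INF n. hh n)" using P2 by (intro cINF_greatest) auto
  show "(INF n. hh n) \<le> hh n" for n using bdd by (rule cINF_lower) simp
  fix e :: real assume "e > 0"
  then have lt: "(INF n. hh n) < (INF n. hh n) + e" by simp
  have "(INF n. hh n) < (INF n. hh n) + e \<longleftrightarrow> (\<exists>n\<in>UNIV. hh n < (INF n. hh n) + e)"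
    by (rule cINF_less_iff) (use bdd in auto)
  then have "\<exists>n. hh n < (INF n. hh n) + e" using lt by simp
  then show "hh (LEAST n. hh n < (INF n. hh n) + e) < (INF n. hh n) + e" by (rule LeastI_ex)
qed

lemma conv_lemma:
  fixes hh :: "nat \<Rightarrow> real" and d :: "nat \<Rightarrow> 'k"
  assumes P1: "\<forall>n. hh n \<in> range nm" and P2: "\<forall>n. 0 \<le> hh n"
    and P3: "\<forall>i j. nm (d i - d j) \<le> max (hh i) (hh j)"
  shows "convergent (\<lambda>k. d (LEAST n. hh n < (INF n. hh n) + 1 / real (Suc k)))"
proof -
  define m where "m = (INF n. hh n)"
  define N where "N k = (LEAST n. hh n < m + 1 / real (Suc k))" for k
  note IF = inf_facts[OF P2, folded m_def]
  have NI: "hh (N k) < m + 1 / real (Suc k)" for k unfolding N_def by (rule IF(3)) simp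
  show ?thesis unfolding m_def[symmetric] N_def[symmetric]
  proof (cases "m = 0")
    case True
    have "Cauchy (\<lambda>k. d (N k))"
      unfolding Cauchy_def
    proof (intro allI impI)
      fix e :: real assume "e > 0"
      then obtain K where K: "inverse (real (Suc K)) < e" using reals_Archimedean by blast
      have "dist (d (N k)) (d (N j)) < e" if "k \<ge> K" "j \<ge> K" for k j
      proof -
        have "dist (d (N k)) (d (N j)) \<le> max (hh (N k)) (hh (N j))" using P3 by (simp add: nm_dist)
        also have "\<dots> < max (1 / real (Suc k)) (1 / real (Suc j))" using NI[of k] NI[of j] True by auto
        also have "\<dots> \<le> 1 / real (Suc K)" using that by (auto simp: frac_le)
        also have "\<dots> < e" using K by (simp add: inverse_eq_divide)
        finally show ?thesis .
      qed
      then show "\<exists>M. \<forall>m\<ge>M. \<forall>n\<ge>M. dist (d (N m)) (d (N n)) < e" by blast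
    qed
    then show "convergent (\<lambda>k. d (N k))" by (rule lf_complete)
  next
    case False
    then have m0: "m > 0" using IF(1) by simp
    define Fs where "Fs = {v \<in> range nm. m < v \<and> v \<le> m + 1}"
    have "Fs \<subseteq> {v \<in> range nm. m \<le> v \<and> v \<le> m + 1}" by (auto simp: Fs_def)
    then have fFs: "finite Fs" using fin_vals[OF m0] finite_subset by blast
    define e where "e = (if Fs = {} then 1 else Min Fs - m)"
    have e0: "e > 0" using fFs by (auto simp: e_def Fs_def)
    have eFs: "\<forall>v\<in>Fs. m + e \<le> v" using fFs by (auto simp: e_def)
    obtain K where K: "inverse (real (Suc K)) < e" using reals_Archimedean[OF e0] by blast
    have key: "hh n < m + 1 / real (Suc k) \<longleftrightarrow> hh n = m" if "k \<ge> K" for n k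
    proof
      assume a: "hh n < m + 1 / real (Suc k)"
      have small: "1 / real (Suc k) < e" using K that
        by (smt (verit, best) frac_le inverse_eq_divide of_nat_0_less_iff of_nat_le_iff zero_less_Suc Suc_le_mono)
      have le1: "1 / real (Suc k) \<le> 1" by simp
      show "hh n = m"
      proof (rule ccontr)
        assume "hh n \<noteq> m"
        then have "m < hh n" using IF(2)[of n] by simp
        moreover have "hh n \<le> m + 1" using a le1 by linarith
        ultimately have "hh n \<in> Fs" using P1 by (auto simp: Fs_def)
        then show False using eFs a small by force
      qed
    next
      assume "hh n = m" then show "hh n < m + 1 / real (Suc k)" by simp
    qed
    have NK: "N k = (LEAST n. hh n = m)" if "k \<ge> K" for k
      unfolding N_def using key[OF that] by simp
    have "eventually (\<lambda>k. d (N k) = d (LEAST n. hh n = m)) sequentially"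
      unfolding eventually_sequentially by (intro exI[of _ K]) (simp add: NK)
    then have "(\<lambda>k. d (N k)) \<longlonglongrightarrow> d (LEAST n. hh n = m)" by (rule tendsto_eventually)
    then show "convergent (\<lambda>k. d (N k))" by (auto simp: convergent_def)
  qed
qed

end

context cl
begin

lemma exists_ce:
  assumes XL: "X \<in> Linf M M nm"
  shows "\<exists>Z. Z \<in> cond_exp_set M G nm X"
proof -
  have Xm[measurable]: "X \<in> borel_measurable M" using XL by (simp add: Linf_def)
  obtain KX where KX0: "KX \<ge> 0" and KX: "AE x in M. nm (X x) \<le> KX" using Linf_bound[OF XL] by blast
  obtain d :: "nat \<Rightarrow> 'k" where d0: "d 0 = 0" and dd: "\<forall>x e. e > 0 \<longrightarrow> (\<exists>n. nm (x - d n) < e)"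
    using dense_seq by blast
  define S where "S n x = nm (X x - d n)" for n x
  have bS: "bnd (S n) (max KX (nm (d n)))" for n
    unfolding S_def by (rule bnd_nm_diff) (use KX in auto)
  define h where "h n = C (S n)" for n
  have hG[measurable]: "h n \<in> borel_measurable G" for n unfolding h_def by simp
  have F1: "AE x in M. \<forall>n. h n x \<in> range nm \<and> 0 \<le> h n x"
    unfolding AE_all_countable
  proof
    fix n
    show "AE x in M. h n x \<in> range nm \<and> 0 \<le> h n x"
      using C_vals[OF bS[of n]] C_bounds[OF bS[of n]] unfolding h_def
      by (auto simp: S_def elim: eventually_rev_mp intro!: eventually_mono[OF _])
  qed
  have F3: "AE x in M. \<forall>i j. nm (d i - d j) \<le> max (h i x) (h j x)"
    unfolding AE_all_countable
  proof (intro allI)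
    fix i j
    have bc: "bnd (\<lambda>_. nm (d i - d j)) (nm (d i - d j))" by (simp add: bnd_def)
    have "AE x in M. (\<lambda>_. nm (d i - d j)) x \<le> max (S i x) (S j x)"
    proof (rule AE_I2)
      fix x
      have "nm (d i - d j) \<le> max (nm (d i - X x)) (nm (X x - d j))" by (rule nm_tri)
      then show "(\<lambda>_. nm (d i - d j)) x \<le> max (S i x) (S j x)" by (simp add: S_def nm_sym)
    qed
    from C_ultra[OF bc bS bS this] C_const[of "nm (d i - d j)", OF nm_nonneg]
    show "AE x in M. nm (d i - d j) \<le> max (h i x) (h j x)"
      unfolding h_def by eventually_elim simp
  qed
  have F4: "AE x in M. h 0 x \<le> KX"
    using C_bounds[OF bS[of 0]] d0 KX0 unfolding h_def by (auto elim: eventually_mono)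
  have cV[simp]: "countable (range nm)" by (rule countable_vals)
  define Good where "Good = {x \<in> space G. (\<forall>n. h n x \<in> range nm \<and> 0 \<le> h n x) \<and>
     (\<forall>i j. nm (d i - d j) \<le> max (h i x) (h j x)) \<and> h 0 x \<le> KX}"
  have rb: "range nm \<in> sets borel"
  proof -
    have "range nm = (\<Union>v\<in>range nm. {v})" by auto
    also have "\<dots> \<in> sets borel" by (intro sets.countable_UN') (auto intro: borel_closed)
    finally show ?thesis .
  qed
  have pr1[measurable]: "Measurable.pred G (\<lambda>x. h n x \<in> range nm)" for n
    by (rule pred_sets2[OF rb hG])
  have pr2[measurable]: "Measurable.pred G (\<lambda>x. \<forall>i j. nm (d i - d j) \<le> max (h i x) (h j x))"
    by measurable
  have GoodG[measurable]: "Good \<in> sets G" unfolding Good_def by measurable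
  have aeGood: "AE x in M. x \<in> Good" using F1 F3 F4 AE_space
    by eventually_elim (auto simp: Good_def space_G)
  define hh where "hh n x = (if x \<in> Good then h n x else nm (d n))" for n x
  have hhG[measurable]: "hh n \<in> borel_measurable G" for n unfolding hh_def by measurable
  have P1: "\<forall>n. hh n x \<in> range nm" for x by (auto simp: hh_def Good_def)
  have P2: "\<forall>n. 0 \<le> hh n x" for x by (auto simp: hh_def Good_def)
  have P3: "\<forall>i j. nm (d i - d j) \<le> max (hh i x) (hh j x)" for x
  proof (cases "x \<in> Good")
    case False
    have "nm (d i - d j) \<le> max (hh i x) (hh j x)" for i j
      using nm_tri[of "d i" "d j" 0] False by (simp add: hh_def)
    then show ?thesis by blast
  qed (auto simp: hh_def Good_def)
  have P4: "hh 0 x \<le> KX" for x using KX0 d0 by (auto simp: hh_def Good_def)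
  have hh_h: "AE x in M. \<forall>n. hh n x = h n x" using aeGood by eventually_elim (auto simp: hh_def)
  define m where "m x = (INF n. hh n x)" for x
  have mG[measurable]: "m \<in> borel_measurable G" unfolding m_def by measurable
  note IF = inf_facts[OF P2]
  define N where "N k x = (LEAST n. hh n x < m x + 1 / real (Suc k))" for k x
  have NI: "hh (N k x) x < m x + 1 / real (Suc k)" for k x
    unfolding N_def m_def by (rule IF(3)) simp
  have NG[measurable]: "(\<lambda>x. N k x) \<in> measurable G (count_space UNIV)" for k
    unfolding N_def by measurable
  define Zk where "Zk k x = d (N k x)" for k x
  have ZkG[measurable]: "Zk k \<in> borel_measurable G" for k
    unfolding Zk_def by (rule measurable_compose[OF NG]) simp
  have conv: "convergent (\<lambda>k. Zk k x)" for x
    using conv_lemma[OF P1 P2 P3, of x] by (simp add: Zk_def N_def m_def)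
  define Z where "Z x = lim (\<lambda>k. Zk k x)" for x
  have Zlim: "(\<lambda>k. Zk k x) \<longlonglongrightarrow> Z x" for x using conv[of x] by (simp add: Z_def convergent_LIMSEQ_iff)
  have ZG[measurable]: "Z \<in> borel_measurable G"
    by (rule borel_measurable_LIMSEQ_metric[OF ZkG Zlim])
  have ZM[measurable]: "Z \<in> borel_measurable M" using meas_G_M[OF ZG] .
  have ZkM[measurable]: "Zk k \<in> borel_measurable M" for k using meas_G_M[OF ZkG] .
  have Zkb: "nm (Zk k x) \<le> KX + 1" for k x
  proof -
    have "nm (Zk k x) = nm (d (N k x) - d 0)" by (simp add: Zk_def d0)
    also have "\<dots> \<le> max (hh (N k x) x) (hh 0 x)" using P3 by blast
    also have "\<dots> \<le> KX + 1"
    proof -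
      have "hh (N k x) x < m x + 1 / real (Suc k)" by (rule NI)
      moreover have "m x \<le> hh 0 x" unfolding m_def by (rule IF(2))
      moreover have "1 / real (Suc k) \<le> 1" by simp
      ultimately show ?thesis using P4[of x] by linarith
    qed
    finally show ?thesis .
  qed
  have Zb: "nm (Z x) \<le> KX + 1" for x
  proof -
    have "(\<lambda>k. dist (Zk k x) 0) \<longlonglongrightarrow> dist (Z x) 0" by (intro tendsto_dist Zlim tendsto_const)
    then show ?thesis using Zkb by (intro LIMSEQ_le_const2[where X="\<lambda>k. dist (Zk k x) 0"]) (auto simp: nm_dist)
  qed
  have ZL: "Z \<in> Linf M G nm" by (rule Linf_G_intro[OF ZG]) (use Zb in auto)
  have up: "AE x in M. C (\<lambda>x. nm (X x - Z x)) x \<le> m x"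
  proof -
    have bR: "bnd (\<lambda>x. nm (X x - Z x)) (max KX (KX + 1))" by (rule bnd_nm_diff) (use KX Zb in auto)
    have bSk: "bnd (\<lambda>x. nm (X x - Zk k x)) (max KX (KX + 1))" for k by (rule bnd_nm_diff) (use KX Zkb in auto)
    have bTk: "bnd (\<lambda>x. nm (Zk k x - Z x)) (max (KX + 1) (KX + 1))" for k by (rule bnd_nm_diff) (use Zkb Zb in auto)
    have a: "AE x in M. \<forall>k. C (\<lambda>x. nm (X x - Z x)) x \<le> max (C (\<lambda>x. nm (X x - Zk k x)) x) (nm (Zk k x - Z x))"
      unfolding AE_all_countable
    proof
      fix k
      have "AE x in M. nm (X x - Z x) \<le> max (nm (X x - Zk k x)) (nm (Zk k x - Z x))"
        by (rule AE_I2) (rule nm_tri)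
      from C_ultra[OF bR bSk bTk this]
      have 1: "AE x in M. C (\<lambda>x. nm (X x - Z x)) x \<le> max (C (\<lambda>x. nm (X x - Zk k x)) x) (C (\<lambda>x. nm (Zk k x - Z x)) x)" .
      have 2: "AE x in M. C (\<lambda>x. nm (Zk k x - Z x)) x = nm (Zk k x - Z x)"
        by (rule C_Gmeas) (use bTk[of k] in \<open>auto simp: bnd_def\<close>)
      show "AE x in M. C (\<lambda>x. nm (X x - Z x)) x \<le> max (C (\<lambda>x. nm (X x - Zk k x)) x) (nm (Zk k x - Z x))"
        using 1 2 by eventually_elim simp
    qed
    have b: "AE x in M. \<forall>k. C (\<lambda>x. nm (X x - Zk k x)) x < m x + 1 / real (Suc k)"
      unfolding AE_all_countable
    proof
      fix k
      define A where "A n = {x \<in> space G. N k x = n}" for n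
      have AG: "A n \<in> sets G" for n unfolding A_def by measurable
      have "AE x in M. \<forall>n. x \<in> A n \<longrightarrow> C (\<lambda>x. nm (X x - Zk k x)) x = C (S n) x"
        unfolding AE_all_countable
      proof
        fix n
        show "AE x in M. x \<in> A n \<longrightarrow> C (\<lambda>x. nm (X x - Zk k x)) x = C (S n) x"
          by (rule C_loc_eq[OF bSk bS AG]) (auto simp: A_def S_def Zk_def)
      qed
      then show "AE x in M. C (\<lambda>x. nm (X x - Zk k x)) x < m x + 1 / real (Suc k)"
        using hh_h AE_space
      proof eventually_elim
        case (elim x)
        then have "x \<in> A (N k x)" by (simp add: A_def space_G)
        then have "C (\<lambda>x. nm (X x - Zk k x)) x = h (N k x) x" using elim by (simp add: h_def)
        also have "\<dots> = hh (N k x) x" using elim by simp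
        also have "\<dots> < m x + 1 / real (Suc k)" by (rule NI)
        finally show ?case .
      qed
    qed
    show ?thesis using a b
    proof eventually_elim
      case (elim x)
      let ?c = "C (\<lambda>x. nm (X x - Z x)) x"
      have m0: "0 \<le> m x" unfolding m_def by (rule IF(1))
      have t1: "(\<lambda>k. m x + 1 / real (Suc k)) \<longlonglongrightarrow> m x + 0"
        by (intro tendsto_add tendsto_const LIMSEQ_Suc[OF lim_1_over_n])
      have t2: "(\<lambda>k. dist (Zk k x) (Z x)) \<longlonglongrightarrow> dist (Z x) (Z x)" by (intro tendsto_dist Zlim tendsto_const)
      have "(\<lambda>k. max (m x + 1 / real (Suc k)) (dist (Zk k x) (Z x))) \<longlonglongrightarrow> max (m x + 0) (dist (Z x) (Z x))"
        by (intro tendsto_max t1 t2)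
      then have "?c \<le> max (m x + 0) (dist (Z x) (Z x))"
      proof (rule LIMSEQ_le_const)
        have "?c \<le> max (m x + 1 / real (Suc k)) (dist (Zk k x) (Z x))" for k
          using elim(1)[rule_format, of k] elim(2)[rule_format, of k]
          by (auto simp: nm_dist)
        then show "\<exists>N. \<forall>n\<ge>N. ?c \<le> max (m x + 1 / real (Suc n)) (dist (Zk n x) (Z x))" by blast
      qed
      then show ?case using m0 by simp
    qed
  qed
  have low: "AE x in M. m x \<le> C (\<lambda>x. nm (X x - Z' x)) x" if Z'L: "Z' \<in> Linf M G nm" for Z'
  proof -
    have Z'G[measurable]: "Z' \<in> borel_measurable G" using Z'L by (simp add: Linf_def)
    have Z'M[measurable]: "Z' \<in> borel_measurable M" using meas_G_M[OF Z'G] .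
    obtain K' where K'0: "K' \<ge> 0" and K': "AE x in M. nm (Z' x) \<le> K'" using Linf_bound[OF Z'L] by blast
    have bS': "bnd (\<lambda>x. nm (X x - Z' x)) (max KX K')" by (rule bnd_nm_diff) (use KX K' in auto)
    have "AE x in M. \<forall>n. h n x \<le> max (C (\<lambda>x. nm (X x - Z' x)) x) (nm (Z' x - d n))"
      unfolding AE_all_countable
    proof
      fix n
      have bT: "bnd (\<lambda>x. nm (Z' x - d n)) (max K' (nm (d n)))" by (rule bnd_nm_diff) (use K' in auto)
      have "AE x in M. S n x \<le> max (nm (X x - Z' x)) (nm (Z' x - d n))"
        by (rule AE_I2) (simp add: S_def nm_tri)
      from C_ultra[OF bS bS' bT this]
      have 1: "AE x in M. C (S n) x \<le> max (C (\<lambda>x. nm (X x - Z' x)) x) (C (\<lambda>x. nm (Z' x - d n)) x)" .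
      have 2: "AE x in M. C (\<lambda>x. nm (Z' x - d n)) x = nm (Z' x - d n)"
        by (rule C_Gmeas) (use bT in \<open>auto simp: bnd_def\<close>)
      show "AE x in M. h n x \<le> max (C (\<lambda>x. nm (X x - Z' x)) x) (nm (Z' x - d n))"
        using 1 2 unfolding h_def by eventually_elim simp
    qed
    then show ?thesis using hh_h C_bounds[OF bS']
    proof eventually_elim
      case (elim x)
      let ?c = "C (\<lambda>x. nm (X x - Z' x)) x"
      show ?case
      proof (rule ccontr)
        assume "\<not> m x \<le> ?c"
        then have lt: "?c < m x" by simp
        then obtain n where n: "nm (Z' x - d n) < m x - ?c" using dd by force
        have "hh n x = h n x" using elim by simp
        also have "\<dots> \<le> max ?c (nm (Z' x - d n))" using elim by blast
        also have "\<dots> < m x" using lt n elim by auto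
        finally have "hh n x < m x" .
        moreover have "m x \<le> hh n x" unfolding m_def by (rule IF(2))
        ultimately show False by simp
      qed
    qed
  qed
  have "Z \<in> cond_exp_set M G nm X"
    unfolding cond_exp_set_def cond_norm_def
  proof (intro CollectI conjI ballI)
    show "Z \<in> Linf M G nm" by (rule ZL)
    fix Z' assume "Z' \<in> Linf M G nm"
    from low[OF this] up show "AE \<omega> in M. C (\<lambda>\<omega>. nm (X \<omega> - Z \<omega>)) \<omega> \<le> C (\<lambda>\<omega>. nm (X \<omega> - Z' \<omega>)) \<omega>"
      by eventually_elim simp
  qed
  then show ?thesis by blast
qed

end

context cl
begin

lemma step:
  assumes XL: "X \<in> Linf M M nm" and YL: "Y \<in> Linf M M nm" and U: "U \<in> cond_exp_set M G nm X"
  shows "\<exists>V\<in>cond_exp_set M G nm Y. norm_inf M nm (\<lambda>x. U x - V x) \<le> norm_inf M nm (\<lambda>\<omega>. X \<omega> - Y \<omega>)"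
proof -
  have Xm[measurable]: "X \<in> borel_measurable M" using XL by (simp add: Linf_def)
  have Ym[measurable]: "Y \<in> borel_measurable M" using YL by (simp add: Linf_def)
  obtain KX where KX: "AE x in M. nm (X x) \<le> KX" using Linf_bound[OF XL] by blast
  obtain KY where KY: "AE x in M. nm (Y x) \<le> KY" using Linf_bound[OF YL] by blast
  define d where "d = norm_inf M nm (\<lambda>\<omega>. X \<omega> - Y \<omega>)"
  have aed: "AE x in M. ereal (nm (X x - Y x)) \<le> d" unfolding d_def norm_inf_def by (rule esssup_AE)
  have "AE x in M. nm (X x - Y x) \<le> max KX KY"
    using bnd_nm_diff[OF Xm Ym KX KY] by (auto simp: bnd_def elim: eventually_mono)
  then have dfin: "d \<le> ereal (max KX KY)" unfolding d_def by (intro norm_inf_le) auto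
  have "AE x in M. 0 \<le> d" using aed by eventually_elim (rule order_trans[rotated], auto)
  then have d0: "0 \<le> d" by simp
  define dr where "dr = real_of_ereal d"
  define KK where "KK = max KX KY"
  have "ereal KK < \<infinity>" by simp
  then have dlt: "d < \<infinity>" using dfin unfolding KK_def[symmetric] by (rule order.strict_trans1[rotated])
  have d_eq: "d = ereal dr" using d0 dlt unfolding dr_def by (cases d) auto
  have dr0: "0 \<le> dr" using d0 d_eq by simp
  have aeXY: "AE x in M. nm (X x - Y x) \<le> dr" using aed by eventually_elim (simp add: d_eq)
  have UL: "U \<in> Linf M G nm" and Uopt: "\<And>Z. Z \<in> Linf M G nm \<Longrightarrow> AE x in M. C (\<lambda>x. nm (X x - U x)) x \<le> C (\<lambda>x. nm (X x - Z x)) x"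
    using U by (auto simp: cond_exp_set_def cond_norm_def)
  obtain V0 where V0: "V0 \<in> cond_exp_set M G nm Y" using exists_ce[OF YL] by blast
  have V0L: "V0 \<in> Linf M G nm" and V0opt: "\<And>Z. Z \<in> Linf M G nm \<Longrightarrow> AE x in M. C (\<lambda>x. nm (Y x - V0 x)) x \<le> C (\<lambda>x. nm (Y x - Z x)) x"
    using V0 by (auto simp: cond_exp_set_def cond_norm_def)
  have UG[measurable]: "U \<in> borel_measurable G" using UL by (simp add: Linf_def)
  have V0G[measurable]: "V0 \<in> borel_measurable G" using V0L by (simp add: Linf_def)
  have UM[measurable]: "U \<in> borel_measurable M" using meas_G_M[OF UG] .
  have V0M[measurable]: "V0 \<in> borel_measurable M" using meas_G_M[OF V0G] .
  obtain KU where KU: "AE x in M. nm (U x) \<le> KU" using Linf_bound[OF UL] by blast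
  obtain KV where KV: "AE x in M. nm (V0 x) \<le> KV" using Linf_bound[OF V0L] by blast
  have bXU: "bnd (\<lambda>x. nm (X x - U x)) (max KX KU)" by (rule bnd_nm_diff[OF Xm UM KX KU])
  have bYU: "bnd (\<lambda>x. nm (Y x - U x)) (max KY KU)" by (rule bnd_nm_diff[OF Ym UM KY KU])
  have bXV: "bnd (\<lambda>x. nm (X x - V0 x)) (max KX KV)" by (rule bnd_nm_diff[OF Xm V0M KX KV])
  have bYV: "bnd (\<lambda>x. nm (Y x - V0 x)) (max KY KV)" by (rule bnd_nm_diff[OF Ym V0M KY KV])
  have bUV: "bnd (\<lambda>x. nm (U x - V0 x)) (max KU KV)" by (rule bnd_nm_diff[OF UM V0M KU KV])
  have bc: "bnd (\<lambda>_. dr) dr" using dr0 by (simp add: bnd_def)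
  have i: "AE x in M. C (\<lambda>x. nm (X x - U x)) x \<le> C (\<lambda>x. nm (X x - V0 x)) x" by (rule Uopt[OF V0L])
  have ii: "AE x in M. C (\<lambda>x. nm (Y x - U x)) x \<le> max (C (\<lambda>x. nm (X x - U x)) x) dr"
  proof -
    have "AE x in M. nm (Y x - U x) \<le> max (nm (X x - U x)) ((\<lambda>_. dr) x)" using aeXY
    proof eventually_elim
      case (elim x)
      have "nm (Y x - U x) \<le> max (nm (Y x - X x)) (nm (X x - U x))" by (rule nm_tri)
      then show ?case using elim nm_sym[of "Y x" "X x"] by auto
    qed
    from C_ultra[OF bYU bXU bc this] C_const[OF dr0] show ?thesis by eventually_elim simp
  qed
  have iii: "AE x in M. C (\<lambda>x. nm (X x - V0 x)) x \<le> max (C (\<lambda>x. nm (Y x - V0 x)) x) dr"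
  proof -
    have "AE x in M. nm (X x - V0 x) \<le> max (nm (Y x - V0 x)) ((\<lambda>_. dr) x)" using aeXY
    proof eventually_elim
      case (elim x)
      have "nm (X x - V0 x) \<le> max (nm (X x - Y x)) (nm (Y x - V0 x))" by (rule nm_tri)
      then show ?case using elim by auto
    qed
    from C_ultra[OF bXV bYV bc this] C_const[OF dr0] show ?thesis by eventually_elim simp
  qed
  have iv: "AE x in M. nm (U x - V0 x) \<le> max (C (\<lambda>x. nm (Y x - U x)) x) (C (\<lambda>x. nm (Y x - V0 x)) x)"
  proof -
    have "AE x in M. nm (U x - V0 x) \<le> max (nm (Y x - U x)) (nm (Y x - V0 x))"
    proof (rule AE_I2)
      fix x
      have "nm (U x - V0 x) \<le> max (nm (U x - Y x)) (nm (Y x - V0 x))" by (rule nm_tri)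
      then show "nm (U x - V0 x) \<le> max (nm (Y x - U x)) (nm (Y x - V0 x))" using nm_sym[of "U x" "Y x"] by simp
    qed
    from C_ultra[OF bUV bYU bYV this]
    have 1: "AE x in M. C (\<lambda>x. nm (U x - V0 x)) x \<le> max (C (\<lambda>x. nm (Y x - U x)) x) (C (\<lambda>x. nm (Y x - V0 x)) x)" .
    have 2: "AE x in M. C (\<lambda>x. nm (U x - V0 x)) x = nm (U x - V0 x)"
      by (rule C_Gmeas) (use bUV in \<open>auto simp: bnd_def\<close>)
    show ?thesis using 1 2 by eventually_elim simp
  qed
  define b0 where "b0 = C (\<lambda>x. nm (Y x - V0 x))"
  have b0G[measurable]: "b0 \<in> borel_measurable G" unfolding b0_def by simp
  define A where "A = {x \<in> space G. nm (U x - V0 x) \<le> b0 x}"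
  have AG[measurable]: "A \<in> sets G" unfolding A_def by measurable
  define V where "V x = (if x \<in> A then U x else V0 x)" for x
  have VG[measurable]: "V \<in> borel_measurable G" unfolding V_def by measurable
  have VM[measurable]: "V \<in> borel_measurable M" using meas_G_M[OF VG] .
  have "AE x in M. nm (V x) \<le> max KU KV" using KU KV by eventually_elim (auto simp: V_def)
  then have VL: "V \<in> Linf M G nm" by (rule Linf_G_intro[OF VG])
  have b0pos: "AE x in M. 0 \<le> b0 x" using C_bounds[OF bYV] unfolding b0_def by (auto elim: eventually_mono)
  have Vopt: "AE x in M. C (\<lambda>x. nm (Y x - V x)) x \<le> C (\<lambda>x. nm (Y x - Z x)) x" if ZL: "Z \<in> Linf M G nm" for Z
  proof -
    define g where "g x = indicator A x * nm (U x - V0 x)" for x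
    have gG[measurable]: "g \<in> borel_measurable G" unfolding g_def by measurable
    have "AE x in M. 0 \<le> nm (U x - V0 x) \<and> nm (U x - V0 x) \<le> max KU KV" using bUV by (simp add: bnd_def)
    then have "AE x in M. 0 \<le> g x \<and> g x \<le> max KU KV"
      by eventually_elim (auto simp: g_def indicator_def intro: order.trans[OF nm_nonneg])
    then have bg: "bnd g (max KU KV)" using meas_G_M[OF gG] by (simp add: bnd_def)
    have KYV: "AE x in M. nm (V x) \<le> max KU KV" using KU KV by eventually_elim (auto simp: V_def)
    have bYV': "bnd (\<lambda>x. nm (Y x - V x)) (max KY (max KU KV))" by (rule bnd_nm_diff[OF Ym VM KY KYV])
    have "AE x in M. nm (Y x - V x) \<le> max (nm (Y x - V0 x)) (g x)"
    proof (rule AE_I2)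
      fix x
      show "nm (Y x - V x) \<le> max (nm (Y x - V0 x)) (g x)"
      proof (cases "x \<in> A")
        case True
        have "nm (Y x - U x) \<le> max (nm (Y x - V0 x)) (nm (V0 x - U x))" by (rule nm_tri)
        then show ?thesis using True nm_sym[of "V0 x" "U x"] by (simp add: V_def g_def)
      next
        case False then show ?thesis by (simp add: V_def g_def)
      qed
    qed
    from C_ultra[OF bYV' bYV bg this]
    have 1: "AE x in M. C (\<lambda>x. nm (Y x - V x)) x \<le> max (b0 x) (C g x)" unfolding b0_def .
    have 2: "AE x in M. C g x = g x" by (rule C_Gmeas) (use bg in \<open>auto simp: bnd_def\<close>)
    show ?thesis using 1 2 b0pos V0opt[OF ZL] AE_space
    proof eventually_elim
      case (elim x)
      have "g x \<le> b0 x" using elim by (auto simp: g_def A_def indicator_def)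
      then show ?case using elim by (auto simp: b0_def)
    qed
  qed
  have VY: "V \<in> cond_exp_set M G nm Y"
    unfolding cond_exp_set_def cond_norm_def using VL Vopt by auto
  have "AE x in M. nm (U x - V x) \<le> dr" using i ii iii iv AE_space
  proof eventually_elim
    case (elim x)
    show ?case
    proof (cases "x \<in> A")
      case True then show ?thesis using dr0 by (simp add: V_def)
    next
      case False
      then have gt: "b0 x < nm (U x - V0 x)" using elim by (auto simp: A_def space_G)
      show ?thesis
      proof (rule ccontr)
        assume "\<not> nm (U x - V x) \<le> dr"
        then have gt2: "dr < nm (U x - V0 x)" using False by (simp add: V_def)
        let ?u = "nm (U x - V0 x)"
        have "?u \<le> C (\<lambda>x. nm (Y x - U x)) x" using elim(4) gt by (auto simp: b0_def max_def split: if_splits)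
        also have "\<dots> \<le> max (C (\<lambda>x. nm (X x - U x)) x) dr" using elim(2) .
        finally have "?u \<le> C (\<lambda>x. nm (X x - U x)) x" using gt2 by (auto simp: max_def split: if_splits)
        also have "\<dots> \<le> C (\<lambda>x. nm (X x - V0 x)) x" using elim(1) .
        also have "\<dots> \<le> max (b0 x) dr" using elim(3) by (simp add: b0_def)
        finally show False using gt gt2 by (auto simp: max_def split: if_splits)
      qed
    qed
  qed
  then have "norm_inf M nm (\<lambda>x. U x - V x) \<le> ereal dr" by (intro norm_inf_le) auto
  then show ?thesis using VY d_eq unfolding d_def by auto
qed

end

theorem mainTheorem17:
  fixes M G :: "'a measure"
    and nm :: "'k::{field, metric_space, second_countable_topology} \<Rightarrow> real"
    and X Y :: "'a \<Rightarrow> 'k"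
  assumes "local_field_abs nm"
    and "prob_space M"
    and "subalgebra M G"
    and "X \<in> Linf M M nm" and "Y \<in> Linf M M nm"
  shows "hausdorff_dist M nm (cond_exp_set M G nm X) (cond_exp_set M G nm Y)
           \<le> norm_inf M nm (\<lambda>\<omega>. X \<omega> - Y \<omega>)"
proof -
  interpret cl M G nm
    using assms(1-3) by (simp add: cl_def ce_def ce_axioms_def lf_def)
  have sym: "norm_inf M nm (\<lambda>\<omega>. Y \<omega> - X \<omega>) = norm_inf M nm (\<lambda>\<omega>. X \<omega> - Y \<omega>)"
    unfolding norm_inf_def using nm_sym by simp
  show ?thesis
    unfolding hausdorff_dist_def
  proof (intro max.boundedI SUP_least)
    fix U assume "U \<in> cond_exp_set M G nm X"
    then obtain V where "V \<in> cond_exp_set M G nm Y" "norm_inf M nm (\<lambda>x. U x - V x) \<le> norm_inf M nm (\<lambda>\<omega>. X \<omega> - Y \<omega>)"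
      using step[OF assms(4,5)] by blast
    then show "(INF V\<in>cond_exp_set M G nm Y. norm_inf M nm (\<lambda>x. U x - V x)) \<le> norm_inf M nm (\<lambda>\<omega>. X \<omega> - Y \<omega>)"
      by (intro INF_lower2)
  next
    fix V assume "V \<in> cond_exp_set M G nm Y"
    then obtain U where "U \<in> cond_exp_set M G nm X" "norm_inf M nm (\<lambda>x. V x - U x) \<le> norm_inf M nm (\<lambda>\<omega>. Y \<omega> - X \<omega>)"
      using step[OF assms(5,4)] by blast
    then show "(INF U\<in>cond_exp_set M G nm X. norm_inf M nm (\<lambda>x. V x - U x)) \<le> norm_inf M nm (\<lambda>\<omega>. X \<omega> - Y \<omega>)"
      using sym by (intro INF_lower2) auto
  qed
qed


end
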